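(* Let $\mathcal{H}$ be an $n$-dimensional (real or complex) Hilbert space, let $F=\{f_i\}_{i=1}^N$ be a tight frame for $\mathcal{H}$, and let $\{q_i\}_{i=1}^N$ be the weight number sequence associated with a probability sequence $\{p_i\}_{i=1}^N$. Then $(F,S_F^{-1}F)$ is a 1-erasure POD-pair if and only if $(F,S_F^{-1}F)\in\zeta_P^{(1)}$.
   Context: A finite sequence $F=\{f_i\}_{i=1}^N$ in $\mathcal{H}$ is a frame if there are $A,B>0$ with $A\|f\|^2\le\sum_{i=1}^N|\langle f,f_i\rangle|^2\le B\|f\|^2$ for all $f$; it is tight if one can take $A=B$. The frame operator is $S_Ff=\sum_i\langle f,f_i\rangle f_i$; canonical dual $S_F^{-1}F=\{S_F^{-1}f_i\}_{i=1}^N$. A frame $G=\{g_i\}_{i=1}^N$ is a dual of $F$ if $f=\sum_i\langle f,f_i\rangle g_i=\sum_i\langle f,g_i\rangle f_i$ for all $f$; then $(F,G)$ is an $(N,n)$ dual pair. A probability sequence is $\{p_i\}_{i=1}^N$ with $0\le p_i\le1$, $\sum p_i=1$; weight numbers $q_i=\frac{\sum_{j} p_j}{\sum_{j} p_j-p_i}\cdot\frac{N-1}{n}$. For $\Lambda\subseteq\{1,\dots,N\}$ the error operator is $E_{\Lambda,(F,G)}f=\sum_{i\in\Lambda}q_i\langle f,f_i\rangle g_i$. Let $\mathcal{O}_P^{(1)}(F,G)=\max_{|\Lambda|=1}\|E_{\Lambda,(F,G)}\|$ and $\mathcal{A}_P^{(1)}(F,G)=\max_{|\Lambda|=1}\frac{\|E_{\Lambda,(F,G)}\|+\rho(E_{\Lambda,(F,G)})}{2}$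 ($\rho$ = spectral radius); let $\mathcal{O}_P^{(1)}$ and $\mathcal{A}_P^{(1)}$ be their infima over all $(N,n)$ dual pairs in $\mathcal{H}$. A dual pair is a 1-erasure POD-pair if $\mathcal{O}_P^{(1)}(F,G)=\mathcal{O}_P^{(1)}$, and a 1-erasure PASOD-pair if $\mathcal{A}_P^{(1)}(F,G)=\mathcal{A}_P^{(1)}$; $\zeta_P^{(1)}$ is the set of 1-erasure PASOD-pairs. *)

theory Defs
  imports "Jordan_Normal_Form.Spectral_Radius"
begin

text \<open>Model: the n-dimensional Hilbert space over the scalar field K (K = Reals for the
real case, K = UNIV for the complex case) is the set of complex vectors of dimension n
with all entries in K.  Finite sequences indexed 1..N in the paper are indexed 0..N-1 here.\<close>

definition Hvecs :: "complex set \<Rightarrow> nat \<Rightarrow> complex vec set" where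
  "Hvecs K n = {f. f \<in> carrier_vec n \<and> (\<forall>k<n. f $ k \<in> K)}"

definition ip :: "complex vec \<Rightarrow> complex vec \<Rightarrow> complex" where
  "ip f g = (\<Sum>k<dim_vec f. f $ k * cnj (g $ k))"

definition vnorm :: "complex vec \<Rightarrow> real" where
  "vnorm f = sqrt (Re (ip f f))"

definition is_frame :: "complex set \<Rightarrow> nat \<Rightarrow> nat \<Rightarrow> (nat \<Rightarrow> complex vec) \<Rightarrow> bool" where
  "is_frame K n N F \<longleftrightarrow> (\<forall>i<N. F i \<in> Hvecs K n) \<and>
     (\<exists>A B. A > 0 \<and> B > 0 \<and> (\<forall>f\<in>Hvecs K n.
        A * (vnorm f)\<^sup>2 \<le> (\<Sum>i<N. (cmod (ip f (F i)))\<^sup>2) \<and>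
        (\<Sum>i<N. (cmod (ip f (F i)))\<^sup>2) \<le> B * (vnorm f)\<^sup>2))"

definition is_tight_frame :: "complex set \<Rightarrow> nat \<Rightarrow> nat \<Rightarrow> (nat \<Rightarrow> complex vec) \<Rightarrow> bool" where
  "is_tight_frame K n N F \<longleftrightarrow> (\<forall>i<N. F i \<in> Hvecs K n) \<and>
     (\<exists>A. A > 0 \<and> (\<forall>f\<in>Hvecs K n.
        (\<Sum>i<N. (cmod (ip f (F i)))\<^sup>2) = A * (vnorm f)\<^sup>2))"

definition frame_op :: "nat \<Rightarrow> nat \<Rightarrow> (nat \<Rightarrow> complex vec) \<Rightarrow> complex vec \<Rightarrow> complex vec" where
  "frame_op n N F f = finsum_vec TYPE(complex) n (\<lambda>i. ip f (F i) \<cdot>\<^sub>v F i) {..<N}"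

definition canon_dual :: "nat \<Rightarrow> nat \<Rightarrow> (nat \<Rightarrow> complex vec) \<Rightarrow> nat \<Rightarrow> complex vec" where
  "canon_dual n N F i = (THE g. g \<in> carrier_vec n \<and> frame_op n N F g = F i)"

definition is_dual :: "complex set \<Rightarrow> nat \<Rightarrow> nat \<Rightarrow> (nat \<Rightarrow> complex vec) \<Rightarrow> (nat \<Rightarrow> complex vec) \<Rightarrow> bool" where
  "is_dual K n N F G \<longleftrightarrow> is_frame K n N G \<and>
     (\<forall>f\<in>Hvecs K n.
        f = finsum_vec TYPE(complex) n (\<lambda>i. ip f (F i) \<cdot>\<^sub>v G i) {..<N} \<and>
        f = finsum_vec TYPE(complex) n (\<lambda>i. ip f (G i) \<cdot>\<^sub>v F i) {..<N})"

definition is_dual_pair :: "complex set \<Rightarrow> nat \<Rightarrow> nat \<Rightarrow> (nat \<Rightarrow> complex vec) \<Rightarrow> (nat \<Rightarrow> complex vec) \<Rightarrow> bool" where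
  "is_dual_pair K n N F G \<longleftrightarrow> is_frame K n N F \<and> is_dual K n N F G"

definition is_prob_seq :: "nat \<Rightarrow> (nat \<Rightarrow> real) \<Rightarrow> bool" where
  "is_prob_seq N p \<longleftrightarrow> (\<forall>i<N. 0 \<le> p i \<and> p i \<le> 1) \<and> (\<Sum>i<N. p i) = 1"

definition weight :: "nat \<Rightarrow> nat \<Rightarrow> (nat \<Rightarrow> real) \<Rightarrow> nat \<Rightarrow> real" where
  "weight N n p i = (\<Sum>j<N. p j) / ((\<Sum>j<N. p j) - p i) * (real N - 1) / real n"

text \<open>Error operator E_{Lambda,(F,G)} f = sum_{i in Lambda} q_i <f,f_i> g_i, as an n x n matrix.\<close>
definition error_op :: "nat \<Rightarrow> nat \<Rightarrow> (nat \<Rightarrow> real) \<Rightarrow> nat set \<Rightarrow> (nat \<Rightarrow> complex vec) \<Rightarrow> (nat \<Rightarrow> complex vec) \<Rightarrow> complex mat" where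
  "error_op N n p \<Lambda> F G = mat n n (\<lambda>(j,k). \<Sum>i\<in>\<Lambda>. complex_of_real (weight N n p i) * (G i $ j) * cnj (F i $ k))"

definition op_norm :: "complex set \<Rightarrow> nat \<Rightarrow> complex mat \<Rightarrow> real" where
  "op_norm K n M = Sup {vnorm (M *\<^sub>v f) | f. f \<in> Hvecs K n \<and> vnorm f \<le> 1}"

definition O1 :: "complex set \<Rightarrow> nat \<Rightarrow> nat \<Rightarrow> (nat \<Rightarrow> real) \<Rightarrow> (nat \<Rightarrow> complex vec) \<Rightarrow> (nat \<Rightarrow> complex vec) \<Rightarrow> real" where
  "O1 K n N p F G = Max {op_norm K n (error_op N n p \<Lambda> F G) | \<Lambda>. \<Lambda> \<subseteq> {..<N} \<and> card \<Lambda> = 1}"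

definition A1 :: "complex set \<Rightarrow> nat \<Rightarrow> nat \<Rightarrow> (nat \<Rightarrow> real) \<Rightarrow> (nat \<Rightarrow> complex vec) \<Rightarrow> (nat \<Rightarrow> complex vec) \<Rightarrow> real" where
  "A1 K n N p F G = Max {(op_norm K n (error_op N n p \<Lambda> F G) + spectral_radius (error_op N n p \<Lambda> F G)) / 2
      | \<Lambda>. \<Lambda> \<subseteq> {..<N} \<and> card \<Lambda> = 1}"

definition O1_opt :: "complex set \<Rightarrow> nat \<Rightarrow> nat \<Rightarrow> (nat \<Rightarrow> real) \<Rightarrow> real" where
  "O1_opt K n N p = Inf {O1 K n N p F G | F G. is_dual_pair K n N F G}"

definition A1_opt :: "complex set \<Rightarrow> nat \<Rightarrow> nat \<Rightarrow> (nat \<Rightarrow> real) \<Rightarrow> real" where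
  "A1_opt K n N p = Inf {A1 K n N p F G | F G. is_dual_pair K n N F G}"

definition is_POD_pair :: "complex set \<Rightarrow> nat \<Rightarrow> nat \<Rightarrow> (nat \<Rightarrow> real) \<Rightarrow> (nat \<Rightarrow> complex vec) \<Rightarrow> (nat \<Rightarrow> complex vec) \<Rightarrow> bool" where
  "is_POD_pair K n N p F G \<longleftrightarrow> is_dual_pair K n N F G \<and> O1 K n N p F G = O1_opt K n N p"

definition is_PASOD_pair :: "complex set \<Rightarrow> nat \<Rightarrow> nat \<Rightarrow> (nat \<Rightarrow> real) \<Rightarrow> (nat \<Rightarrow> complex vec) \<Rightarrow> (nat \<Rightarrow> complex vec) \<Rightarrow> bool" where
  "is_PASOD_pair K n N p F G \<longleftrightarrow> is_dual_pair K n N F G \<and> A1 K n N p F G = A1_opt K n N p"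

definition zeta1 :: "complex set \<Rightarrow> nat \<Rightarrow> nat \<Rightarrow> (nat \<Rightarrow> real) \<Rightarrow> ((nat \<Rightarrow> complex vec) \<times> (nat \<Rightarrow> complex vec)) set" where
  "zeta1 K n N p = {(F, G). is_PASOD_pair K n N p F G}"

end

theory Submission
  imports Defs
begin


lemma CS_real:
  fixes a b :: "nat \<Rightarrow> real"
  shows "(\<Sum>i\<in>I. a i * b i)\<^sup>2 \<le> (\<Sum>i\<in>I. (a i)\<^sup>2) * (\<Sum>i\<in>I. (b i)\<^sup>2)"
proof -
  have e1: "(\<Sum>i\<in>I. a i * b i)\<^sup>2 = (\<Sum>i\<in>I. \<Sum>j\<in>I. a i * b i * (a j * b j))"
    by (simp add: power2_eq_square sum_product)
  have e2: "(\<Sum>i\<in>I. (a i)\<^sup>2) * (\<Sum>i\<in>I. (b i)\<^sup>2) = (\<Sum>i\<in>I. \<Sum>j\<in>I. (a i)\<^sup>2 * (b j)\<^sup>2)"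
    by (simp add: sum_product)
  have e3: "(\<Sum>i\<in>I. \<Sum>j\<in>I. (a i)\<^sup>2 * (b j)\<^sup>2) = (\<Sum>i\<in>I. \<Sum>j\<in>I. (a j)\<^sup>2 * (b i)\<^sup>2)"
    by (rule sum.swap)
  have "0 \<le> (\<Sum>i\<in>I. \<Sum>j\<in>I. (a i * b j - a j * b i)\<^sup>2)" by (intro sum_nonneg) auto
  also have "\<dots> = (\<Sum>i\<in>I. \<Sum>j\<in>I. (a i)\<^sup>2 * (b j)\<^sup>2) + (\<Sum>i\<in>I. \<Sum>j\<in>I. (a j)\<^sup>2 * (b i)\<^sup>2)
      - 2 * (\<Sum>i\<in>I. \<Sum>j\<in>I. a i * b i * (a j * b j))"
    by (simp add: sum_subtractf sum.distrib sum_distrib_left power2_eq_square algebra_simps)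
  finally show ?thesis using e1 e2 e3 by linarith
qed

lemma CS_complex:
  fixes a b :: "nat \<Rightarrow> complex"
  shows "(cmod (\<Sum>i\<in>I. a i * b i))\<^sup>2 \<le> (\<Sum>i\<in>I. (cmod (a i))\<^sup>2) * (\<Sum>i\<in>I. (cmod (b i))\<^sup>2)"
proof -
  have "cmod (\<Sum>i\<in>I. a i * b i) \<le> (\<Sum>i\<in>I. cmod (a i) * cmod (b i))"
    by (metis (no_types, lifting) norm_mult norm_sum sum.cong)
  hence "(cmod (\<Sum>i\<in>I. a i * b i))\<^sup>2 \<le> (\<Sum>i\<in>I. cmod (a i) * cmod (b i))\<^sup>2"
    by (intro power_mono) auto
  also have "\<dots> \<le> (\<Sum>i\<in>I. (cmod (a i))\<^sup>2) * (\<Sum>i\<in>I. (cmod (b i))\<^sup>2)" by (rule CS_real)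
  finally show ?thesis .
qed

definition nsq :: "complex vec \<Rightarrow> real" where
  "nsq f = (\<Sum>k<dim_vec f. (cmod (f $ k))\<^sup>2)"

lemma nsq_nonneg: "0 \<le> nsq f"
  unfolding nsq_def by (intro sum_nonneg) auto

lemma ip_self: "ip f f = complex_of_real (nsq f)"
  unfolding ip_def nsq_def of_real_sum by (intro sum.cong refl) (metis complex_norm_square)

lemma vnorm_nsq: "vnorm f = sqrt (nsq f)"
  unfolding vnorm_def ip_self by simp

lemma vnorm_sq: "(vnorm f)\<^sup>2 = nsq f"
  unfolding vnorm_nsq by (simp add: nsq_nonneg)

lemma vnorm_nonneg: "0 \<le> vnorm f"
  unfolding vnorm_nsq by (simp add: nsq_nonneg)

lemma ip_cnj: "dim_vec g = dim_vec f \<Longrightarrow> ip g f = cnj (ip f g)"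
  unfolding ip_def by (simp add: mult.commute)

lemma ip_CS: assumes "dim_vec g = dim_vec f"
  shows "(cmod (ip f g))\<^sup>2 \<le> nsq f * nsq g"
  using CS_complex[where a="\<lambda>k. f $ k" and b="\<lambda>k. cnj (g $ k)" and I="{..<dim_vec f}"] assms unfolding ip_def nsq_def by simp

lemma ip_CS': assumes "dim_vec g = dim_vec f"
  shows "cmod (ip f g) \<le> vnorm f * vnorm g"
proof -
  have "cmod (ip f g) = sqrt ((cmod (ip f g))\<^sup>2)" by simp
  also have "\<dots> \<le> sqrt (nsq f * nsq g)" using ip_CS[OF assms] by (intro real_sqrt_le_mono)
  also have "\<dots> = vnorm f * vnorm g" unfolding vnorm_nsq by (simp add: real_sqrt_mult)
  finally show ?thesis .
qed

lemma nsq_zero: assumes "nsq f = 0" shows "f = 0\<^sub>v (dim_vec f)"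
proof (rule eq_vecI)
  fix k assume k: "k < dim_vec (0\<^sub>v (dim_vec f) :: complex vec)"
  have "(cmod (f $ k))\<^sup>2 = 0"
    using assms k unfolding nsq_def by (subst (asm) sum_nonneg_eq_0_iff) auto
  thus "f $ k = 0\<^sub>v (dim_vec f) $ k" using k by simp
qed simp

lemma nsq_smult: "nsq (c \<cdot>\<^sub>v f) = (cmod c)\<^sup>2 * nsq f"
  unfolding nsq_def by (simp add: sum_distrib_left norm_mult power_mult_distrib)

lemma vnorm_smult: "vnorm (c \<cdot>\<^sub>v f) = cmod c * vnorm f"
  unfolding vnorm_nsq nsq_smult by (simp add: real_sqrt_mult)

lemma ip_smult_left: "ip (c \<cdot>\<^sub>v f) g = c * ip f g"
  unfolding ip_def by (simp add: sum_distrib_left mult.assoc)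

lemma ip_smult_right: "dim_vec g = dim_vec f \<Longrightarrow> ip f (c \<cdot>\<^sub>v g) = cnj c * ip f g"
  unfolding ip_def by (simp add: sum_distrib_left algebra_simps)

lemma vnorm_pos: assumes "f \<noteq> 0\<^sub>v (dim_vec f)" shows "vnorm f > 0"
  using nsq_zero[of f] assms nsq_nonneg[of f] unfolding vnorm_nsq by force



lemma weight_nonneg: assumes "is_prob_seq N p" "i < N" shows "0 \<le> weight N n p i"
proof -
  have s: "(\<Sum>j<N. p j) = 1" and pi: "p i \<le> 1" using assms unfolding is_prob_seq_def by auto
  have N: "0 \<le> real N - 1" using assms(2) by simp
  show ?thesis unfolding weight_def s using pi N by (intro divide_nonneg_nonneg mult_nonneg_nonneg) auto
qed

lemma error_op_carrier: "error_op N n p L F G \<in> carrier_mat n n"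
  unfolding error_op_def by simp

lemma error_op_mult: assumes "v \<in> carrier_vec n" "G i \<in> carrier_vec n"
  shows "error_op N n p {i} F G *\<^sub>v v = (complex_of_real (weight N n p i) * ip v (F i)) \<cdot>\<^sub>v G i"
proof (rule eq_vecI)
  fix j assume "j < dim_vec ((complex_of_real (weight N n p i) * ip v (F i)) \<cdot>\<^sub>v G i)"
  hence j: "j < n" using assms by simp
  show "(error_op N n p {i} F G *\<^sub>v v) $ j = ((complex_of_real (weight N n p i) * ip v (F i)) \<cdot>\<^sub>v G i) $ j"
    using j assms unfolding error_op_def ip_def
    by (simp add: scalar_prod_def sum_distrib_left lessThan_atLeast0 algebra_simps)
qed (use assms in \<open>simp add: error_op_def\<close>)

definition goodK :: "complex set \<Rightarrow> bool" where
  "goodK K \<longleftrightarrow> K = \<real> \<or> K = UNIV"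

lemma Hvecs_carrier: "f \<in> Hvecs K n \<Longrightarrow> f \<in> carrier_vec n"
  unfolding Hvecs_def by auto

lemma Hvecs_zero: "goodK K \<Longrightarrow> 0\<^sub>v n \<in> Hvecs K n"
  unfolding Hvecs_def goodK_def by auto

lemma Hvecs_smult: assumes "goodK K" "f \<in> Hvecs K n"
  shows "(complex_of_real r \<cdot>\<^sub>v f) \<in> Hvecs K n"
  using assms unfolding Hvecs_def goodK_def by auto

lemma Hvecs_UNIV: "Hvecs UNIV n = carrier_vec n"
  unfolding Hvecs_def by auto

lemma vnorm_zero[simp]: "vnorm (0\<^sub>v n) = 0"
  unfolding vnorm_nsq nsq_def by simp

lemma op_norm_le: assumes "goodK K" "0 \<le> C"
  "\<And>f. f \<in> Hvecs K n \<Longrightarrow> vnorm f \<le> 1 \<Longrightarrow> vnorm (M *\<^sub>v f) \<le> C"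
  shows "op_norm K n M \<le> C"
  unfolding op_norm_def
proof (rule cSup_least)
  show "{vnorm (M *\<^sub>v f) |f. f \<in> Hvecs K n \<and> vnorm f \<le> 1} \<noteq> {}"
    using Hvecs_zero[OF assms(1), of n] by force
qed (use assms in auto)

lemma op_norm_ge: assumes "\<And>f. f \<in> Hvecs K n \<Longrightarrow> vnorm f \<le> 1 \<Longrightarrow> vnorm (M *\<^sub>v f) \<le> C"
  and "f \<in> Hvecs K n" "vnorm f \<le> 1"
  shows "vnorm (M *\<^sub>v f) \<le> op_norm K n M"
  unfolding op_norm_def
  by (rule cSup_upper) (use assms in \<open>auto intro!: bdd_aboveI[of _ C]\<close>)

lemma op_norm_rank1: assumes K: "goodK K" and F: "F i \<in> Hvecs K n" and G: "G i \<in> carrier_vec n"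
  and q: "0 \<le> weight N n p i"
  shows "op_norm K n (error_op N n p {i} F G) = weight N n p i * vnorm (F i) * vnorm (G i)"
proof -
  let ?q = "weight N n p i"
  let ?E = "error_op N n p {i} F G"
  have Fc: "F i \<in> carrier_vec n" using F Hvecs_carrier by auto
  have bound: "vnorm (?E *\<^sub>v f) \<le> ?q * vnorm (F i) * vnorm (G i)"
    if f: "f \<in> Hvecs K n" "vnorm f \<le> 1" for f
  proof -
    have fc: "f \<in> carrier_vec n" using f Hvecs_carrier by auto
    have "vnorm (?E *\<^sub>v f) = ?q * cmod (ip f (F i)) * vnorm (G i)"
      unfolding error_op_mult[of f n G i, OF fc G] vnorm_smult using q by (simp add: norm_mult)
    also have "\<dots> \<le> ?q * (vnorm f * vnorm (F i)) * vnorm (G i)"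
      using ip_CS'[of "F i" f] fc Fc q vnorm_nonneg
      by (intro mult_right_mono mult_left_mono) auto
    also have "\<dots> \<le> ?q * (1 * vnorm (F i)) * vnorm (G i)"
      using f q vnorm_nonneg
      by (intro mult_right_mono mult_left_mono) auto
    finally show ?thesis by simp
  qed
  have le: "op_norm K n ?E \<le> ?q * vnorm (F i) * vnorm (G i)"
    by (rule op_norm_le[OF K _ bound]) (use q vnorm_nonneg in auto)
  have ge: "?q * vnorm (F i) * vnorm (G i) \<le> op_norm K n ?E"
  proof (cases "F i = 0\<^sub>v n")
    case True
    have "vnorm (?E *\<^sub>v 0\<^sub>v n) \<le> op_norm K n ?E"
      by (rule op_norm_ge[OF bound]) (use Hvecs_zero[OF K] in auto)
    moreover have "vnorm (?E *\<^sub>v 0\<^sub>v n) = 0"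
      unfolding error_op_mult[of "0\<^sub>v n" n G i, OF zero_carrier_vec G] vnorm_smult by (simp add: ip_def)
    ultimately show ?thesis using True by simp
  next
    case False
    have pos: "vnorm (F i) > 0" using vnorm_pos[of "F i"] False Fc by auto
    define f0 where "f0 = complex_of_real (1 / vnorm (F i)) \<cdot>\<^sub>v F i"
    have f0H: "f0 \<in> Hvecs K n" unfolding f0_def by (rule Hvecs_smult[OF K F])
    have nf0: "vnorm f0 = 1" unfolding f0_def vnorm_smult using pos by (simp add: norm_divide)
    have ipf0: "ip f0 (F i) = complex_of_real (vnorm (F i))"
      unfolding f0_def ip_smult_left ip_self using pos
      by (simp add: vnorm_sq[symmetric] power2_eq_square)
    have "vnorm (?E *\<^sub>v f0) \<le> op_norm K n ?E"
      by (rule op_norm_ge[OF bound f0H]) (use nf0 in auto)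
    moreover have "vnorm (?E *\<^sub>v f0) = ?q * vnorm (F i) * vnorm (G i)"
      unfolding error_op_mult[of f0 n G i, OF Hvecs_carrier[OF f0H] G] vnorm_smult ipf0
      using q pos by (simp add: norm_mult)
    ultimately show ?thesis by simp
  qed
  from le ge show ?thesis by simp
qed

lemma sr_nonneg: assumes "n > 0" shows "0 \<le> spectral_radius (error_op N n p L F G)"
  using spectral_radius_mem_max(1)[OF error_op_carrier[of N n p L F G] assms] by auto

lemma sr_upper: assumes n: "n > 0" and F: "F i \<in> carrier_vec n" and G: "G i \<in> carrier_vec n"
  and q: "0 \<le> weight N n p i"
  shows "spectral_radius (error_op N n p {i} F G) \<le> weight N n p i * vnorm (F i) * vnorm (G i)"
proof -
  let ?q = "weight N n p i"
  let ?E = "error_op N n p {i} F G"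
  obtain l where l: "l \<in> spectrum ?E" and r: "spectral_radius ?E = cmod l"
    using spectral_radius_mem_max(1)[OF error_op_carrier[of N n p "{i}" F G] n] by auto
  from l obtain v where v: "eigenvector ?E v l" unfolding spectrum_def eigenvalue_def by auto
  have vc: "v \<in> carrier_vec n" and v0: "v \<noteq> 0\<^sub>v n" and ev: "?E *\<^sub>v v = l \<cdot>\<^sub>v v"
    using v unfolding eigenvector_def by (auto simp: error_op_def)
  have vpos: "vnorm v > 0" using vnorm_pos[of v] vc v0 by auto
  have "cmod l * vnorm v = vnorm (?E *\<^sub>v v)" using ev vnorm_smult by simp
  also have "\<dots> = ?q * cmod (ip v (F i)) * vnorm (G i)"
    unfolding error_op_mult[of v n G i, OF vc G] vnorm_smult using q by (simp add: norm_mult)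
  also have "\<dots> \<le> ?q * (vnorm v * vnorm (F i)) * vnorm (G i)"
    using ip_CS'[of "F i" v] vc F q vnorm_nonneg
    by (intro mult_right_mono mult_left_mono) auto
  finally have "cmod l * vnorm v \<le> (?q * vnorm (F i) * vnorm (G i)) * vnorm v" by (simp add: algebra_simps)
  hence "cmod l \<le> ?q * vnorm (F i) * vnorm (G i)" using vpos by simp
  thus ?thesis using r by simp
qed

lemma sr_lower: assumes n: "n > 0" and F: "F i \<in> carrier_vec n" and G: "G i \<in> carrier_vec n"
  and q: "0 \<le> weight N n p i"
  shows "weight N n p i * cmod (ip (G i) (F i)) \<le> spectral_radius (error_op N n p {i} F G)"
proof (cases "complex_of_real (weight N n p i) * ip (G i) (F i) = 0")
  case True
  hence "weight N n p i * cmod (ip (G i) (F i)) = 0"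
    by (metis mult_eq_0_iff norm_zero of_real_eq_0_iff)
  thus ?thesis using sr_nonneg[OF n, of N p "{i}" F G] by auto
next
  case False
  let ?l = "complex_of_real (weight N n p i) * ip (G i) (F i)"
  have G0: "G i \<noteq> 0\<^sub>v n" using False by (auto simp: ip_def)
  have "eigenvector (error_op N n p {i} F G) (G i) ?l"
    unfolding eigenvector_def using G G0 error_op_mult[of "G i" n G i, OF G G] by (auto simp: error_op_def)
  hence "?l \<in> spectrum (error_op N n p {i} F G)"
    unfolding spectrum_def eigenvalue_def by auto
  hence "cmod ?l \<le> spectral_radius (error_op N n p {i} F G)"
    using spectral_radius_mem_max(2)[OF error_op_carrier[of N n p "{i}" F G] n] by auto
  thus ?thesis using q by (simp add: norm_mult)
qed



lemma ip_add_left: "dim_vec b = dim_vec a \<Longrightarrow> ip (a + b) g = ip a g + ip b g"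
  unfolding ip_def by (simp add: algebra_simps sum.distrib)

lemma ip_unit_left: assumes "j < n" shows "ip (unit_vec n j) g = cnj (g $ j)"
proof -
  have "ip (unit_vec n j) g = (\<Sum>k<n. if k = j then cnj (g $ j) else 0)"
    unfolding ip_def using assms by (intro sum.cong) (auto simp: unit_vec_def)
  thus ?thesis using assms by simp
qed

lemma nsq_unit: assumes "j < n" shows "nsq (unit_vec n j) = 1"
proof -
  have "nsq (unit_vec n j) = (\<Sum>k<n. if k = j then 1 else 0)"
    unfolding nsq_def using assms by (intro sum.cong) (auto simp: unit_vec_def)
  thus ?thesis using assms by simp
qed

lemma cmod_add_sq: "(cmod (z + w))\<^sup>2 = (cmod z)\<^sup>2 + (cmod w)\<^sup>2 + 2 * Re (z * cnj w)"
  unfolding cmod_power2 by (simp add: power2_eq_square algebra_simps)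

lemma nsq_test: assumes "j < n" "k < n" "j \<noteq> k"
  shows "nsq (unit_vec n j + c \<cdot>\<^sub>v unit_vec n k) = 1 + (cmod c)\<^sup>2"
proof -
  have "nsq (unit_vec n j + c \<cdot>\<^sub>v unit_vec n k) = (\<Sum>l<n. (cmod ((if l = j then 1 else 0) + c * (if l = k then 1 else 0)))\<^sup>2)"
    unfolding nsq_def using assms by (intro sum.cong) (auto simp: unit_vec_def)
  also have "\<dots> = (\<Sum>l<n. (if l = j then 1 else 0) + (if l = k then (cmod c)\<^sup>2 else 0))"
    by (intro sum.cong refl) (use assms in auto)
  also have "\<dots> = 1 + (cmod c)\<^sup>2" using assms by (simp add: sum.distrib)
  finally show ?thesis .
qed

lemma tight_T:
  assumes K: "goodK K" and FH: "\<forall>i<N. F i \<in> Hvecs K n" and A: "\<forall>f\<in>Hvecs K n. (\<Sum>i<N. (cmod (ip f (F i)))\<^sup>2) = A * (vnorm f)\<^sup>2"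
    and j: "j < n" and k: "k < n"
  shows "(\<Sum>i<N. F i $ j * cnj (F i $ k)) = (if j = k then complex_of_real A else 0)"
proof -
  define P where "P l = (\<Sum>i<N. (cmod (F i $ l))\<^sup>2)" for l
  define T where "T = (\<Sum>i<N. F i $ j * cnj (F i $ k))"
  have Pj: "P l = A" if l: "l < n" for l
  proof -
    have "unit_vec n l \<in> Hvecs K n" using K l unfolding Hvecs_def goodK_def by auto
    from A[rule_format, OF this] show ?thesis
      unfolding vnorm_sq P_def using l by (simp add: ip_unit_left nsq_unit)
  qed
  show ?thesis
  proof (cases "j = k")
    case True
    have "T = complex_of_real (P j)" unfolding T_def P_def True of_real_sum
      by (intro sum.cong refl) (metis complex_norm_square)
    thus ?thesis using Pj[OF j] True T_def by simp
  next
    case False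
    have key: "Re (c * T) = 0" if c: "c \<in> K" for c
    proof -
      have fH: "unit_vec n j + c \<cdot>\<^sub>v unit_vec n k \<in> Hvecs K n"
        using K j k c unfolding Hvecs_def goodK_def by auto
      have ipf: "ip (unit_vec n j + c \<cdot>\<^sub>v unit_vec n k) (F i) = cnj (F i $ j) + c * cnj (F i $ k)" for i
        using j k by (simp add: ip_add_left ip_smult_left ip_unit_left)
      have "(\<Sum>i<N. (cmod (cnj (F i $ j) + c * cnj (F i $ k)))\<^sup>2) = A * (1 + (cmod c)\<^sup>2)"
        using A[rule_format, OF fH] unfolding vnorm_sq ipf nsq_test[OF j k False] .
      moreover have "(\<Sum>i<N. (cmod (cnj (F i $ j) + c * cnj (F i $ k)))\<^sup>2)
         = P j + (cmod c)\<^sup>2 * P k + 2 * Re (c * T)"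
      proof -
        have "(\<Sum>i<N. (cmod (cnj (F i $ j) + c * cnj (F i $ k)))\<^sup>2)
           = (\<Sum>i<N. (cmod (F i $ j))\<^sup>2 + (cmod c)\<^sup>2 * (cmod (F i $ k))\<^sup>2 + 2 * Re (c * (F i $ j * cnj (F i $ k))))"
          by (intro sum.cong refl) (simp add: cmod_add_sq norm_mult power_mult_distrib algebra_simps)
        also have "\<dots> = P j + (cmod c)\<^sup>2 * P k + 2 * Re (c * T)"
          unfolding P_def T_def by (simp add: sum.distrib sum_distrib_left Re_sum)
        finally show ?thesis .
      qed
      ultimately show ?thesis using Pj[OF j] Pj[OF k] by (simp add: algebra_simps)
    qed
    have "Re T = 0" using key[of 1] K unfolding goodK_def by auto
    moreover have "Im T = 0"
    proof (cases "K = UNIV")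
      case True
      then show ?thesis using key[of \<i>] by simp
    next
      case False
      hence KR: "K = \<real>" using K unfolding goodK_def by auto
      have "T \<in> \<real>" unfolding T_def
        using FH j k KR unfolding Hvecs_def by (auto intro!: sum_in_Reals Reals_mult simp: Reals_cnj_iff)
      thus ?thesis by (simp add: complex_is_Real_iff)
    qed
    ultimately have "T = 0" by (simp add: complex_eq_iff)
    thus ?thesis using False T_def by simp
  qed
qed



lemma frame_op_index: assumes "\<forall>i<N. F i \<in> carrier_vec n" "j < n"
  shows "frame_op n N F g $ j = (\<Sum>i<N. ip g (F i) * F i $ j)"
  unfolding frame_op_def using assms by (subst index_finsum_vec) (auto intro!: sum.cong)

lemma frame_op_carrier: assumes "\<forall>i<N. F i \<in> carrier_vec n"
  shows "frame_op n N F g \<in> carrier_vec n"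
  unfolding frame_op_def using assms by (intro finsum_vec_closed) auto

lemma frame_op_tight:
  assumes K: "goodK K" and FH: "\<forall>i<N. F i \<in> Hvecs K n"
    and A: "\<forall>f\<in>Hvecs K n. (\<Sum>i<N. (cmod (ip f (F i)))\<^sup>2) = A * (vnorm f)\<^sup>2"
    and g: "g \<in> carrier_vec n"
  shows "frame_op n N F g = complex_of_real A \<cdot>\<^sub>v g"
proof (rule eq_vecI)
  have FC: "\<forall>i<N. F i \<in> carrier_vec n" using FH Hvecs_carrier by auto
  fix j assume "j < dim_vec (complex_of_real A \<cdot>\<^sub>v g)"
  hence j: "j < n" using g by simp
  have "frame_op n N F g $ j = (\<Sum>i<N. ip g (F i) * F i $ j)" by (rule frame_op_index[OF FC j])
  also have "\<dots> = (\<Sum>i<N. \<Sum>k<n. g $ k * (F i $ j * cnj (F i $ k)))"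
    unfolding ip_def using g by (simp add: sum_distrib_right sum_distrib_left mult.commute mult.left_commute)
  also have "\<dots> = (\<Sum>k<n. g $ k * (\<Sum>i<N. F i $ j * cnj (F i $ k)))"
    by (subst sum.swap) (simp add: sum_distrib_left)
  also have "\<dots> = (\<Sum>k<n. g $ k * (if j = k then complex_of_real A else 0))"
    by (intro sum.cong refl) (simp add: tight_T[OF K FH A j])
  also have "\<dots> = complex_of_real A * g $ j" using j by (simp add: if_distrib cong: if_cong)
  finally show "frame_op n N F g $ j = (complex_of_real A \<cdot>\<^sub>v g) $ j" using j g by simp
next
  have "\<forall>i<N. F i \<in> carrier_vec n" using assms(2) Hvecs_carrier by auto
  from frame_op_carrier[OF this, of g] show "dim_vec (frame_op n N F g) = dim_vec (complex_of_real A \<cdot>\<^sub>v g)"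
    using g by simp
qed

lemma canon_dual_tight:
  assumes K: "goodK K" and T: "is_tight_frame K n N F"
  shows "\<exists>A>0. \<forall>i<N. canon_dual n N F i = complex_of_real (1 / A) \<cdot>\<^sub>v F i"
proof -
  obtain A where Apos: "A > 0" and FH: "\<forall>i<N. F i \<in> Hvecs K n"
    and A: "\<forall>f\<in>Hvecs K n. (\<Sum>i<N. (cmod (ip f (F i)))\<^sup>2) = A * (vnorm f)\<^sup>2"
    using T unfolding is_tight_frame_def by auto
  have "canon_dual n N F i = complex_of_real (1 / A) \<cdot>\<^sub>v F i" if i: "i < N" for i
  proof -
    have Fi: "F i \<in> carrier_vec n" using FH i Hvecs_carrier by auto
    show ?thesis unfolding canon_dual_def
    proof (rule the_equality)
      show "complex_of_real (1 / A) \<cdot>\<^sub>v F i \<in> carrier_vec n \<and>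
        frame_op n N F (complex_of_real (1 / A) \<cdot>\<^sub>v F i) = F i"
        using Fi Apos by (simp add: frame_op_tight[OF K FH A] smult_smult_assoc)
    next
      fix g assume g: "g \<in> carrier_vec n \<and> frame_op n N F g = F i"
      hence "complex_of_real A \<cdot>\<^sub>v g = F i" using frame_op_tight[OF K FH A] by auto
      hence "complex_of_real (1 / A) \<cdot>\<^sub>v (complex_of_real A \<cdot>\<^sub>v g) = complex_of_real (1 / A) \<cdot>\<^sub>v F i" by simp
      thus "g = complex_of_real (1 / A) \<cdot>\<^sub>v F i" using Apos g by (simp add: smult_smult_assoc)
    qed
  qed
  thus ?thesis using Apos by auto
qed

lemma card1_set: "{g L | L. L \<subseteq> {..<N} \<and> card L = 1} = (\<lambda>i. g {i}) ` {..<N}"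
  by (auto simp: card_1_singleton_iff)

lemma O1_eq: "O1 K n N p F G = Max ((\<lambda>i. op_norm K n (error_op N n p {i} F G)) ` {..<N})"
  unfolding O1_def using card1_set[of "\<lambda>L. op_norm K n (error_op N n p L F G)" N] by simp

lemma A1_eq: "A1 K n N p F G = Max ((\<lambda>i. (op_norm K n (error_op N n p {i} F G)
   + spectral_radius (error_op N n p {i} F G)) / 2) ` {..<N})"
  unfolding A1_def using card1_set[of "\<lambda>L. (op_norm K n (error_op N n p L F G)
   + spectral_radius (error_op N n p L F G)) / 2" N] by simp

lemma canon_A1_O1:
  assumes n: "n > 0" and K: "goodK K" and T: "is_tight_frame K n N F" and P: "is_prob_seq N p"
  shows "A1 K n N p F (canon_dual n N F) = O1 K n N p F (canon_dual n N F)"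
proof -
  obtain A where Apos: "A > 0" and cd: "\<forall>i<N. canon_dual n N F i = complex_of_real (1 / A) \<cdot>\<^sub>v F i"
    using canon_dual_tight[OF K T] by auto
  have FH: "\<forall>i<N. F i \<in> Hvecs K n" using T unfolding is_tight_frame_def by auto
  let ?G = "canon_dual n N F"
  have "spectral_radius (error_op N n p {i} F ?G) = op_norm K n (error_op N n p {i} F ?G)"
    if i: "i < N" for i
  proof -
    have Fi: "F i \<in> carrier_vec n" using FH i Hvecs_carrier by auto
    have Gi: "?G i \<in> carrier_vec n" using cd i Fi by simp
    have q: "0 \<le> weight N n p i" by (rule weight_nonneg[OF P i])
    have on: "op_norm K n (error_op N n p {i} F ?G) = weight N n p i * vnorm (F i) * vnorm (?G i)"
      by (rule op_norm_rank1[of K F i n ?G N p, OF K _ Gi q]) (use FH i in auto)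
    have ng: "vnorm (?G i) = vnorm (F i) / A" using cd i Apos by (simp add: vnorm_smult norm_divide)
    have ipg: "cmod (ip (?G i) (F i)) = vnorm (F i) * vnorm (F i) / A"
      using cd i Apos vnorm_nonneg[of "F i"]
      by (simp add: ip_smult_left ip_self vnorm_sq[symmetric] power2_eq_square norm_mult norm_divide)
    have "weight N n p i * cmod (ip (?G i) (F i)) \<le> spectral_radius (error_op N n p {i} F ?G)"
      by (rule sr_lower[of n F i ?G N p, OF n Fi Gi q])
    moreover have "spectral_radius (error_op N n p {i} F ?G) \<le> weight N n p i * vnorm (F i) * vnorm (?G i)"
      by (rule sr_upper[of n F i ?G N p, OF n Fi Gi q])
    ultimately show ?thesis unfolding on using ng ipg by (simp add: algebra_simps)
  qed
  thus ?thesis unfolding A1_eq O1_eq by (intro arg_cong[where f=Max] image_cong) auto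
qed



lemma ip_cnj2: "dim_vec f = dim_vec g \<Longrightarrow> cnj (ip g f) = ip f g"
  using ip_cnj[of f g] by simp

lemma ip_quad_term: assumes "dim_vec a = dim_vec b"
  shows "ip a b * ip b a = complex_of_real ((cmod (ip a b))\<^sup>2)"
proof -
  have "ip b a = cnj (ip a b)" using ip_cnj[of b a] assms by simp
  thus ?thesis by (metis complex_norm_square)
qed

lemma finsum_vec_eq: fixes z :: "nat \<Rightarrow> complex vec" assumes "\<forall>i<N. z i \<in> carrier_vec n"
  shows "finsum_vec TYPE(complex) n (\<lambda>i. c i \<cdot>\<^sub>v z i) {..<N} = vec n (\<lambda>j. \<Sum>i<N. c i * z i $ j)"
proof (rule eq_vecI)
  have "finsum_vec TYPE(complex) n (\<lambda>i. c i \<cdot>\<^sub>v z i) {..<N} \<in> carrier_vec n"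
    using assms by (intro finsum_vec_closed) auto
  thus "dim_vec (finsum_vec TYPE(complex) n (\<lambda>i. c i \<cdot>\<^sub>v z i) {..<N}) = dim_vec (vec n (\<lambda>j. \<Sum>i<N. c i * z i $ j))"
    by simp
  fix j assume "j < dim_vec (vec n (\<lambda>j. \<Sum>i<N. c i * z i $ j))"
  hence j: "j < n" by simp
  show "finsum_vec TYPE(complex) n (\<lambda>i. c i \<cdot>\<^sub>v z i) {..<N} $ j = vec n (\<lambda>j. \<Sum>i<N. c i * z i $ j) $ j"
  proof -
    have "finsum_vec TYPE(complex) n (\<lambda>i. c i \<cdot>\<^sub>v z i) {..<N} $ j = (\<Sum>f<N. (c f \<cdot>\<^sub>v z f) $ j)"
      by (rule index_finsum_vec) (use assms j in auto)
    also have "\<dots> = (\<Sum>i<N. c i * z i $ j)" by (intro sum.cong refl) (use assms j in auto)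
    finally show ?thesis using j by simp
  qed
qed

lemma ip_lincomb: fixes z :: "nat \<Rightarrow> complex vec" assumes "\<forall>i<N. z i \<in> carrier_vec n"
  shows "ip (vec n (\<lambda>j. \<Sum>i<N. c i * z i $ j)) b = (\<Sum>i<N. c i * ip (z i) b)"
proof -
  have "ip (vec n (\<lambda>j. \<Sum>i<N. c i * z i $ j)) b = (\<Sum>j<n. \<Sum>i<N. c i * z i $ j * cnj (b $ j))"
    unfolding ip_def by (simp add: sum_distrib_right)
  also have "\<dots> = (\<Sum>i<N. \<Sum>j<n. c i * z i $ j * cnj (b $ j))" by (rule sum.swap)
  also have "\<dots> = (\<Sum>i<N. c i * ip (z i) b)"
    unfolding ip_def using assms by (intro sum.cong refl) (auto simp: sum_distrib_left mult.assoc)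
  finally show ?thesis .
qed

lemma ip_right_lincomb: fixes z :: "nat \<Rightarrow> complex vec" assumes "\<forall>i<N. z i \<in> carrier_vec n" "a \<in> carrier_vec n"
  shows "ip a (vec n (\<lambda>j. \<Sum>i<N. c i * z i $ j)) = (\<Sum>i<N. cnj (c i) * ip a (z i))"
proof -
  have "ip a (vec n (\<lambda>j. \<Sum>i<N. c i * z i $ j)) = cnj (ip (vec n (\<lambda>j. \<Sum>i<N. c i * z i $ j)) a)"
    using assms by (subst ip_cnj) auto
  also have "\<dots> = (\<Sum>i<N. cnj (c i) * cnj (ip (z i) a))" unfolding ip_lincomb[OF assms(1)] by simp
  also have "\<dots> = (\<Sum>i<N. cnj (c i) * ip a (z i))"
    using assms by (intro sum.cong refl) (auto simp: ip_cnj2)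
  finally show ?thesis .
qed

definition Sop :: "nat \<Rightarrow> nat \<Rightarrow> (nat \<Rightarrow> complex vec) \<Rightarrow> complex vec \<Rightarrow> complex vec" where
  "Sop n N z a = vec n (\<lambda>j. \<Sum>i<N. ip a (z i) * z i $ j)"

definition Smat :: "nat \<Rightarrow> nat \<Rightarrow> (nat \<Rightarrow> complex vec) \<Rightarrow> complex mat" where
  "Smat n N z = mat n n (\<lambda>(j,k). \<Sum>i<N. z i $ j * cnj (z i $ k))"

lemma dim_Sop[simp]: "dim_vec (Sop n N z a) = n"
  unfolding Sop_def by simp

lemma Sop_carrier[simp]: "Sop n N z a \<in> carrier_vec n"
  unfolding Sop_def by simp

lemma Smat_carrier[simp]: "Smat n N z \<in> carrier_mat n n"
  unfolding Smat_def by simp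

lemma Smat_mult: assumes "a \<in> carrier_vec n" shows "Smat n N z *\<^sub>v a = Sop n N z a"
proof (rule eq_vecI)
  fix j assume "j < dim_vec (Sop n N z a)"
  hence j: "j < n" by simp
  have "(Smat n N z *\<^sub>v a) $ j = (\<Sum>k<n. (\<Sum>i<N. z i $ j * cnj (z i $ k)) * a $ k)"
    using j assms by (simp add: Smat_def scalar_prod_def lessThan_atLeast0)
  also have "\<dots> = (\<Sum>k<n. \<Sum>i<N. a $ k * (z i $ j * cnj (z i $ k)))"
    by (intro sum.cong refl) (simp add: sum_distrib_left mult.commute)
  also have "\<dots> = (\<Sum>i<N. \<Sum>k<n. a $ k * (z i $ j * cnj (z i $ k)))"
    by (rule sum.swap)
  also have "\<dots> = (\<Sum>i<N. \<Sum>k<n. a $ k * cnj (z i $ k) * z i $ j)"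
    by (simp add: mult_ac)
  also have "\<dots> = Sop n N z a $ j"
    unfolding Sop_def ip_def using j assms by (simp add: sum_distrib_right)
  finally show "(Smat n N z *\<^sub>v a) $ j = Sop n N z a $ j" .
qed (use assms in \<open>simp add: Smat_def\<close>)

lemma Sop_ip_left: assumes "\<forall>i<N. z i \<in> carrier_vec n"
  shows "ip (Sop n N z a) b = (\<Sum>i<N. ip a (z i) * ip (z i) b)"
  unfolding Sop_def by (rule ip_lincomb[OF assms])

lemma Sop_ip_right: assumes "\<forall>i<N. z i \<in> carrier_vec n" "a \<in> carrier_vec n" "b \<in> carrier_vec n"
  shows "ip a (Sop n N z b) = (\<Sum>i<N. ip a (z i) * ip (z i) b)"
proof -
  have "ip a (Sop n N z b) = (\<Sum>i<N. cnj (ip b (z i)) * ip a (z i))"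
    unfolding Sop_def by (rule ip_right_lincomb[OF assms(1,2)])
  also have "\<dots> = (\<Sum>i<N. ip a (z i) * ip (z i) b)"
    using assms by (intro sum.cong refl) (simp add: ip_cnj[of "z _" b] mult.commute)
  finally show ?thesis .
qed

lemma Sop_herm: assumes "\<forall>i<N. z i \<in> carrier_vec n" "a \<in> carrier_vec n" "b \<in> carrier_vec n"
  shows "ip (Sop n N z a) b = ip a (Sop n N z b)"
  unfolding Sop_ip_left[OF assms(1)] Sop_ip_right[OF assms] ..

lemma Sop_quad: assumes "\<forall>i<N. z i \<in> carrier_vec n" "a \<in> carrier_vec n"
  shows "ip (Sop n N z a) a = complex_of_real (\<Sum>i<N. (cmod (ip a (z i)))\<^sup>2)"
  unfolding Sop_ip_left[OF assms(1)] of_real_sum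
  using assms by (intro sum.cong refl) (auto simp: ip_quad_term)

lemma dual_unit: fixes F G :: "nat \<Rightarrow> complex vec" assumes K: "goodK K" and F: "\<forall>i<N. F i \<in> carrier_vec n" and G: "\<forall>i<N. G i \<in> carrier_vec n"
  and D: "\<forall>f\<in>Hvecs K n. f = finsum_vec TYPE(complex) n (\<lambda>i. ip f (F i) \<cdot>\<^sub>v G i) {..<N}"
  and j: "j < n" and k: "k < n"
  shows "(\<Sum>i<N. G i $ j * cnj (F i $ k)) = (if j = k then 1 else 0)"
proof -
  have "unit_vec n k \<in> Hvecs K n" using K k unfolding Hvecs_def goodK_def by auto
  from D[rule_format, OF this] have "unit_vec n k = vec n (\<lambda>j. \<Sum>i<N. ip (unit_vec n k) (F i) * G i $ j)"
    unfolding finsum_vec_eq[OF G] .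
  hence "unit_vec n k $ j = (\<Sum>i<N. cnj (F i $ k) * G i $ j)"
    using j k by (simp add: ip_unit_left)
  thus ?thesis using j k by (simp add: mult.commute)
qed

lemma dual_ext: fixes F G :: "nat \<Rightarrow> complex vec" assumes F: "\<forall>i<N. F i \<in> carrier_vec n" and G: "\<forall>i<N. G i \<in> carrier_vec n"
  and M: "\<And>j k. j < n \<Longrightarrow> k < n \<Longrightarrow> (\<Sum>i<N. G i $ j * cnj (F i $ k)) = (if j = k then 1 else 0)"
  and a: "a \<in> carrier_vec n"
  shows "vec n (\<lambda>j. \<Sum>i<N. ip a (F i) * G i $ j) = a"
proof (rule eq_vecI)
  fix j assume "j < dim_vec a" hence j: "j < n" using a by simp
  have "vec n (\<lambda>j. \<Sum>i<N. ip a (F i) * G i $ j) $ j = (\<Sum>i<N. \<Sum>k<n. a $ k * (G i $ j * cnj (F i $ k)))"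
    using j a unfolding ip_def by (simp add: sum_distrib_left sum_distrib_right mult.commute mult.left_commute)
  also have "\<dots> = (\<Sum>k<n. a $ k * (\<Sum>i<N. G i $ j * cnj (F i $ k)))"
    by (subst sum.swap) (simp add: sum_distrib_left)
  also have "\<dots> = (\<Sum>k<n. a $ k * (if j = k then 1 else 0))"
    by (intro sum.cong refl) (simp add: M j)
  also have "\<dots> = a $ j" using j by (simp add: if_distrib cong: if_cong)
  finally show "vec n (\<lambda>j. \<Sum>i<N. ip a (F i) * G i $ j) $ j = a $ j" .
qed (use a in simp)



definition alf :: "complex vec \<Rightarrow> complex vec \<Rightarrow> real" where
  "alf x y = sqrt (vnorm x * vnorm y) / (2 * vnorm x)"
definition bet :: "complex vec \<Rightarrow> complex vec \<Rightarrow> real" where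
  "bet x y = sqrt (vnorm x * vnorm y) / (2 * vnorm y)"
definition uvec :: "complex vec \<Rightarrow> complex vec \<Rightarrow> complex vec" where
  "uvec x y = complex_of_real (alf x y) \<cdot>\<^sub>v x + complex_of_real (bet x y) \<cdot>\<^sub>v y"
definition wvec :: "complex vec \<Rightarrow> complex vec \<Rightarrow> complex vec" where
  "wvec x y = complex_of_real (alf x y) \<cdot>\<^sub>v x - complex_of_real (bet x y) \<cdot>\<^sub>v y"

lemma ip_add_right: "dim_vec b = dim_vec a \<Longrightarrow> dim_vec c = dim_vec a \<Longrightarrow> ip a (b + c) = ip a b + ip a c"
  unfolding ip_def by (simp add: algebra_simps sum.distrib)

lemma ip_minus_right: "dim_vec b = dim_vec a \<Longrightarrow> dim_vec c = dim_vec a \<Longrightarrow> ip a (b - c) = ip a b - ip a c"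
  unfolding ip_def by (simp add: algebra_simps sum_subtractf)

lemma cmod_pm: "(cmod (z + w))\<^sup>2 = (cmod (z - w))\<^sup>2 + 4 * Re (z * cnj w)"
  unfolding cmod_power2 by (simp add: power2_eq_square algebra_simps)

lemma vnorm_zero_iff: assumes "x \<in> carrier_vec n" shows "vnorm x = 0 \<longleftrightarrow> x = 0\<^sub>v n"
  using nsq_zero[of x] assms unfolding vnorm_nsq by (auto simp: nsq_def)

lemma alf_bet: assumes "x \<in> carrier_vec n" "y \<in> carrier_vec n"
  shows "4 * alf x y * bet x y = (if vnorm x * vnorm y = 0 then 0 else 1)"
proof (cases "vnorm x * vnorm y = 0")
  case True
  then show ?thesis unfolding alf_def bet_def by auto
next
  case False
  hence px: "vnorm x > 0" and py: "vnorm y > 0" using vnorm_nonneg[of x] vnorm_nonneg[of y]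
    by (auto simp: less_le)
  have "sqrt (vnorm x * vnorm y) * sqrt (vnorm x * vnorm y) = vnorm x * vnorm y"
    using px py by simp
  thus ?thesis unfolding alf_def bet_def using False px py by (simp add: field_simps)
qed

lemma U2: assumes a: "a \<in> carrier_vec n" and x: "x \<in> carrier_vec n" and y: "y \<in> carrier_vec n"
  shows "(cmod (ip a (uvec x y)))\<^sup>2 = (cmod (ip a (wvec x y)))\<^sup>2 + Re (ip a x * cnj (ip a y))"
proof -
  let ?p = "complex_of_real (alf x y) * ip a x" and ?q = "complex_of_real (bet x y) * ip a y"
  have iu: "ip a (uvec x y) = ?p + ?q" unfolding uvec_def using a x y
    by (simp add: ip_add_right ip_smult_right)
  have iw: "ip a (wvec x y) = ?p - ?q" unfolding wvec_def using a x y
    by (simp add: ip_minus_right ip_smult_right)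
  have "(cmod (ip a (uvec x y)))\<^sup>2 = (cmod (ip a (wvec x y)))\<^sup>2 + 4 * Re (?p * cnj ?q)"
    unfolding iu iw by (rule cmod_pm)
  also have "4 * Re (?p * cnj ?q) = (4 * alf x y * bet x y) * Re (ip a x * cnj (ip a y))"
    by (simp add: algebra_simps)
  also have "\<dots> = Re (ip a x * cnj (ip a y))"
  proof (cases "vnorm x * vnorm y = 0")
    case True
    hence "x = 0\<^sub>v n \<or> y = 0\<^sub>v n" using vnorm_zero_iff x y by auto
    hence "ip a x = 0 \<or> ip a y = 0" unfolding ip_def using a by auto
    thus ?thesis by auto
  next
    case False thus ?thesis using alf_bet[OF x y] by simp
  qed
  finally show ?thesis .
qed

lemma U3: assumes x: "x \<in> carrier_vec n" and y: "y \<in> carrier_vec n"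
  shows "nsq (uvec x y) \<le> (vnorm x * vnorm y + cmod (ip y x)) / 2"
proof (cases "vnorm x * vnorm y = 0")
  case True
  hence "alf x y = 0" "bet x y = 0" unfolding alf_def bet_def by auto
  hence "uvec x y = 0\<^sub>v n" unfolding uvec_def using x y by auto
  hence "nsq (uvec x y) = 0" by (simp add: nsq_def)
  thus ?thesis using True by auto
next
  case False
  hence px: "vnorm x > 0" and py: "vnorm y > 0" using vnorm_nonneg[of x] vnorm_nonneg[of y]
    by (auto simp: less_le)
  let ?a = "alf x y" and ?b = "bet x y"
  have "ip (uvec x y) (uvec x y) = complex_of_real (?a * ?a) * ip x x + complex_of_real (?a * ?b) * ip x y
     + complex_of_real (?a * ?b) * ip y x + complex_of_real (?b * ?b) * ip y y"
    unfolding uvec_def using x y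
    by (simp add: ip_add_left ip_add_right ip_smult_left ip_smult_right algebra_simps)
  have "nsq (uvec x y) = Re (ip (uvec x y) (uvec x y))" by (simp add: ip_self)
  also have "\<dots> = ?a * ?a * nsq x + ?a * ?b * Re (ip x y) + ?a * ?b * Re (ip y x) + ?b * ?b * nsq y"
    unfolding \<open>ip (uvec x y) (uvec x y) = _\<close> by (simp add: ip_self)
  also have "Re (ip y x) = Re (ip x y)" using ip_cnj[of y x] x y by simp
  also have "?a * ?a * nsq x = vnorm x * vnorm y / 4"
  proof -
    have "sqrt (vnorm x * vnorm y) * sqrt (vnorm x * vnorm y) = vnorm x * vnorm y" using px py by simp
    thus ?thesis unfolding alf_def vnorm_sq[symmetric] using px by (simp add: field_simps power2_eq_square)
  qed
  also have "?b * ?b * nsq y = vnorm x * vnorm y / 4"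
  proof -
    have "sqrt (vnorm x * vnorm y) * sqrt (vnorm x * vnorm y) = vnorm x * vnorm y" using px py by simp
    thus ?thesis unfolding bet_def vnorm_sq[symmetric] using py by (simp add: field_simps power2_eq_square)
  qed
  also have "?a * ?b = 1 / 4" using alf_bet[OF x y] False by simp
  finally have e: "nsq (uvec x y) = (vnorm x * vnorm y + Re (ip x y)) / 2" by simp
  have "Re (ip x y) \<le> cmod (ip x y)" by (rule complex_Re_le_cmod)
  also have "cmod (ip x y) = cmod (ip y x)" using ip_cnj[of y x] x y by simp
  finally show ?thesis unfolding e by simp
qed



lemma Sop_bound: fixes z :: "nat \<Rightarrow> complex vec"
  assumes z: "\<forall>i<N. z i \<in> carrier_vec n" and h: "h \<in> carrier_vec n"
  shows "nsq (Sop n N z h) \<le> (\<Sum>i<N. nsq (z i))\<^sup>2 * nsq h"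
proof -
  let ?D = "\<Sum>i<N. nsq (z i)"
  have A: "(\<Sum>i<N. (cmod (ip h (z i)))\<^sup>2) \<le> nsq h * ?D"
  proof -
    have "(\<Sum>i<N. (cmod (ip h (z i)))\<^sup>2) \<le> (\<Sum>i<N. nsq h * nsq (z i))"
      by (intro sum_mono ip_CS) (use z h in auto)
    thus ?thesis by (simp add: sum_distrib_left)
  qed
  have "nsq (Sop n N z h) = (\<Sum>j<n. (cmod (\<Sum>i<N. ip h (z i) * z i $ j))\<^sup>2)"
    unfolding nsq_def Sop_def by simp
  also have "\<dots> \<le> (\<Sum>j<n. (\<Sum>i<N. (cmod (ip h (z i)))\<^sup>2) * (\<Sum>i<N. (cmod (z i $ j))\<^sup>2))"
    by (intro sum_mono CS_complex)
  also have "\<dots> = (\<Sum>i<N. (cmod (ip h (z i)))\<^sup>2) * (\<Sum>j<n. \<Sum>i<N. (cmod (z i $ j))\<^sup>2)"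
    by (simp add: sum_distrib_left)
  also have "(\<Sum>j<n. \<Sum>i<N. (cmod (z i $ j))\<^sup>2) = ?D"
    unfolding nsq_def using z by (subst sum.swap) (intro sum.cong refl, auto)
  also have "(\<Sum>i<N. (cmod (ip h (z i)))\<^sup>2) * ?D \<le> (nsq h * ?D) * ?D"
    by (intro mult_right_mono A) (simp add: sum_nonneg nsq_nonneg)
  finally show ?thesis by (simp add: power2_eq_square algebra_simps)
qed

lemma mat_lincomb: fixes z :: "nat \<Rightarrow> complex vec"
  assumes B: "B \<in> carrier_mat n n" and z: "\<forall>i<N. z i \<in> carrier_vec n"
  shows "B *\<^sub>v vec n (\<lambda>k. \<Sum>i<N. c i * z i $ k) = vec n (\<lambda>j. \<Sum>i<N. c i * (B *\<^sub>v z i) $ j)"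
proof (rule eq_vecI)
  fix j assume "j < dim_vec (vec n (\<lambda>j. \<Sum>i<N. c i * (B *\<^sub>v z i) $ j))"
  hence j: "j < n" by simp
  have "(B *\<^sub>v vec n (\<lambda>k. \<Sum>i<N. c i * z i $ k)) $ j = (\<Sum>k<n. B $$ (j, k) * (\<Sum>i<N. c i * z i $ k))"
    using B j by (simp add: scalar_prod_def lessThan_atLeast0)
  also have "\<dots> = (\<Sum>k<n. \<Sum>i<N. c i * (B $$ (j, k) * z i $ k))"
    by (intro sum.cong refl) (simp add: sum_distrib_left mult.left_commute)
  also have "\<dots> = (\<Sum>i<N. \<Sum>k<n. c i * (B $$ (j, k) * z i $ k))" by (rule sum.swap)
  also have "\<dots> = (\<Sum>i<N. c i * (B *\<^sub>v z i) $ j)"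
  proof (intro sum.cong refl)
    fix i assume "i \<in> {..<N}"
    hence zi: "dim_vec (z i) = n" using z by auto
    show "(\<Sum>k<n. c i * (B $$ (j, k) * z i $ k)) = c i * (B *\<^sub>v z i) $ j"
      using B j zi by (simp add: scalar_prod_def lessThan_atLeast0 sum_distrib_left)
  qed
  finally show "(B *\<^sub>v vec n (\<lambda>k. \<Sum>i<N. c i * z i $ k)) $ j = vec n (\<lambda>j. \<Sum>i<N. c i * (B *\<^sub>v z i) $ j) $ j"
    using j by simp
qed (use B in simp)

lemma real_mat_conj: assumes M: "M \<in> carrier_mat n n" and R: "\<And>j k. j < n \<Longrightarrow> k < n \<Longrightarrow> M $$ (j,k) \<in> \<real>"
  and v: "v \<in> carrier_vec n"
  shows "M *\<^sub>v vec n (\<lambda>k. cnj (v $ k)) = vec n (\<lambda>j. cnj ((M *\<^sub>v v) $ j))"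
proof (rule eq_vecI)
  fix j assume "j < dim_vec (vec n (\<lambda>j. cnj ((M *\<^sub>v v) $ j)))"
  hence j: "j < n" by simp
  have "(M *\<^sub>v vec n (\<lambda>k. cnj (v $ k))) $ j = (\<Sum>k<n. M $$ (j,k) * cnj (v $ k))"
    using M j by (simp add: scalar_prod_def lessThan_atLeast0)
  also have "\<dots> = (\<Sum>k<n. cnj (M $$ (j,k) * v $ k))"
    using R j by (intro sum.cong refl) (simp add: Reals_cnj_iff)
  also have "\<dots> = cnj ((M *\<^sub>v v) $ j)"
    using M j v by (simp add: scalar_prod_def lessThan_atLeast0 cnj_sum)
  finally show "(M *\<^sub>v vec n (\<lambda>k. cnj (v $ k))) $ j = vec n (\<lambda>j. cnj ((M *\<^sub>v v) $ j)) $ j"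
    using j by simp
qed (use M in simp)

lemma frame_N_pos: assumes n: "n > 0" and K: "goodK K" and F: "is_frame K n N F" shows "N > 0"
proof (rule ccontr)
  assume "\<not> N > 0" hence N0: "N = 0" by simp
  obtain A where A: "A > 0" "\<forall>f\<in>Hvecs K n. A * (vnorm f)\<^sup>2 \<le> (\<Sum>i<N. (cmod (ip f (F i)))\<^sup>2)"
    using F unfolding is_frame_def by auto
  have "unit_vec n 0 \<in> Hvecs K n" using K n unfolding Hvecs_def goodK_def by auto
  from A(2)[rule_format, OF this] have "A * 1 \<le> 0" using n N0 by (simp add: vnorm_sq nsq_unit)
  thus False using A(1) by simp
qed

lemma construct:
  fixes F G :: "nat \<Rightarrow> complex vec"
  assumes n: "n > 0" and K: "goodK K" and P: "is_prob_seq N p" and D: "is_dual_pair K n N F G"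
  shows "\<exists>U V. is_dual_pair K n N U V \<and> O1 K n N p U V \<le> A1 K n N p F G"
proof -
  have FH: "\<forall>i<N. F i \<in> Hvecs K n" and GH: "\<forall>i<N. G i \<in> Hvecs K n"
    using D unfolding is_dual_pair_def is_dual_def is_frame_def by auto
  have FC: "\<forall>i<N. F i \<in> carrier_vec n" and GC: "\<forall>i<N. G i \<in> carrier_vec n"
    using FH GH Hvecs_carrier by auto
  have D1: "\<forall>f\<in>Hvecs K n. f = finsum_vec TYPE(complex) n (\<lambda>i. ip f (F i) \<cdot>\<^sub>v G i) {..<N}"
    using D unfolding is_dual_pair_def is_dual_def by auto
  have M1: "(\<Sum>i<N. G i $ j * cnj (F i $ k)) = (if j = k then 1 else 0)" if "j < n" "k < n" for j k
    by (rule dual_unit[OF K FC GC D1 that])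
  have E1: "vec n (\<lambda>j. \<Sum>i<N. ip a (F i) * G i $ j) = a" if "a \<in> carrier_vec n" for a
    by (rule dual_ext[OF FC GC M1 that])
  have E2: "(\<Sum>i<N. ip a (F i) * cnj (ip a (G i))) = complex_of_real (nsq a)" if a: "a \<in> carrier_vec n" for a
  proof -
    have "complex_of_real (nsq a) = ip a a" by (simp add: ip_self)
    also have "\<dots> = ip (vec n (\<lambda>j. \<Sum>i<N. ip a (F i) * G i $ j)) a" using E1[OF a] by simp
    also have "\<dots> = (\<Sum>i<N. ip a (F i) * ip (G i) a)" by (rule ip_lincomb[OF GC])
    also have "\<dots> = (\<Sum>i<N. ip a (F i) * cnj (ip a (G i)))"
      using GC a by (intro sum.cong refl) (simp add: ip_cnj[of "G _" a])
    finally show ?thesis by simp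
  qed
  define u where "u i = uvec (F i) (G i)" for i
  define w where "w i = wvec (F i) (G i)" for i
  have UC: "\<forall>i<N. u i \<in> carrier_vec n" using FC GC unfolding u_def uvec_def by auto
  have WC: "\<forall>i<N. w i \<in> carrier_vec n" using FC GC unfolding w_def wvec_def by auto
  have UH: "\<forall>i<N. u i \<in> Hvecs K n"
  proof (intro allI impI)
    fix i assume i: "i < N"
    have Fi: "F i \<in> Hvecs K n" and Gi: "G i \<in> Hvecs K n" using FH GH i by auto
    have ui: "u i $ k = complex_of_real (alf (F i) (G i)) * F i $ k + complex_of_real (bet (F i) (G i)) * G i $ k"
      if "k < n" for k using that Fi Gi unfolding Hvecs_def u_def uvec_def by auto
    show "u i \<in> Hvecs K n" using UC i Fi Gi K ui unfolding Hvecs_def goodK_def by auto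
  qed
  have Q1: "nsq a \<le> (\<Sum>i<N. (cmod (ip a (u i)))\<^sup>2)" if a: "a \<in> carrier_vec n" for a
  proof -
    have "(\<Sum>i<N. (cmod (ip a (u i)))\<^sup>2) = (\<Sum>i<N. (cmod (ip a (w i)))\<^sup>2 + Re (ip a (F i) * cnj (ip a (G i))))"
      unfolding u_def w_def using FC GC a by (intro sum.cong refl) (simp add: U2)
    also have "\<dots> = (\<Sum>i<N. (cmod (ip a (w i)))\<^sup>2) + nsq a"
      unfolding sum.distrib Re_sum[symmetric] E2[OF a] by simp
    finally show ?thesis by (simp add: sum_nonneg)
  qed
  define S where "S = Smat n N u"
  have SC: "S \<in> carrier_mat n n" unfolding S_def by simp
  have Smul: "S *\<^sub>v a = Sop n N u a" if "a \<in> carrier_vec n" for a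
    unfolding S_def by (rule Smat_mult[OF that])
  have inj: "a = 0\<^sub>v n" if a: "a \<in> carrier_vec n" and Sa: "S *\<^sub>v a = 0\<^sub>v n" for a
  proof -
    have "complex_of_real (\<Sum>i<N. (cmod (ip a (u i)))\<^sup>2) = ip (Sop n N u a) a"
      by (rule Sop_quad[OF UC a, symmetric])
    also have "\<dots> = 0" using Sa Smul[OF a] by (simp add: ip_def)
    finally have "complex_of_real (\<Sum>i<N. (cmod (ip a (u i)))\<^sup>2) = 0" .
    hence "(\<Sum>i<N. (cmod (ip a (u i)))\<^sup>2) = 0" by (simp only: of_real_eq_0_iff)
    hence "nsq a = 0" using Q1[OF a] nsq_nonneg[of a] by simp
    thus ?thesis using nsq_zero[of a] a by simp
  qed
  have "det S \<noteq> 0"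
    using det_0_iff_vec_prod_zero_field[OF SC] inj by auto
  from det_non_zero_imp_unit[OF SC this, of "()"]
  obtain B where BC: "B \<in> carrier_mat n n" and BS: "B * S = 1\<^sub>m n" and SB: "S * B = 1\<^sub>m n"
    unfolding Units_def ring_mat_def by auto
  have SBv: "S *\<^sub>v (B *\<^sub>v z) = z" if "z \<in> carrier_vec n" for z
    using assoc_mult_mat_vec[OF SC BC that] SB that by simp
  have BSv: "B *\<^sub>v (S *\<^sub>v z) = z" if "z \<in> carrier_vec n" for z
    using assoc_mult_mat_vec[OF BC SC that] BS that by simp
  define v where "v i = B *\<^sub>v u i" for i
  have VC: "\<forall>i<N. v i \<in> carrier_vec n" unfolding v_def using BC UC by (metis mult_mat_vec_carrier)
  have Sv: "Sop n N u (v i) = u i" if i: "i < N" for i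
  proof -
    have vi: "v i \<in> carrier_vec n" and ui: "u i \<in> carrier_vec n" using VC UC i by auto
    have "Sop n N u (v i) = S *\<^sub>v v i" by (rule Smul[OF vi, symmetric])
    also have "\<dots> = S *\<^sub>v (B *\<^sub>v u i)" unfolding v_def ..
    also have "\<dots> = u i" by (rule SBv[OF ui])
    finally show ?thesis .
  qed
  have VH: "\<forall>i<N. v i \<in> Hvecs K n"
  proof (cases "K = UNIV")
    case True thus ?thesis using VC Hvecs_UNIV by auto
  next
    case False
    hence KR: "K = \<real>" using K unfolding goodK_def by auto
    show ?thesis
    proof (intro allI impI)
      fix i assume i: "i < N"
      have ureal: "u l $ j \<in> \<real>" if "l < N" "j < n" for l j
        using UH that KR unfolding Hvecs_def by auto
      have ureal': "cnj (u l $ j) \<in> \<real>" if "l < N" "j < n" for l j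
        using ureal[OF that] by (simp add: Reals_cnj_iff)
      have Sreal: "S $$ (j,k) \<in> \<real>" if "j < n" "k < n" for j k
        unfolding S_def Smat_def using that by (simp, intro sum_in_Reals Reals_mult ureal ureal') auto
      define cv where "cv = vec n (\<lambda>k. cnj (v i $ k))"
      have cvC: "cv \<in> carrier_vec n" unfolding cv_def by simp
      have "S *\<^sub>v cv = vec n (\<lambda>j. cnj ((S *\<^sub>v v i) $ j))"
        unfolding cv_def by (rule real_mat_conj[OF SC Sreal]) (use VC i in auto)
      also have "S *\<^sub>v v i = u i" using Smul[of "v i"] Sv[OF i] VC i by auto
      also have "vec n (\<lambda>j. cnj (u i $ j)) = u i"
        using ureal[OF i] UC i by (intro eq_vecI) (auto simp: Reals_cnj_iff)
      finally have "S *\<^sub>v cv = u i" .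
      hence "cv = v i" using BSv[OF cvC] unfolding v_def by simp
      have "cnj (v i $ k) = v i $ k" if k: "k < n" for k
      proof -
        have "cv $ k = cnj (v i $ k)" unfolding cv_def using k by simp
        thus ?thesis using \<open>cv = v i\<close> by simp
      qed
      thus "v i \<in> Hvecs K n" using VC i KR unfolding Hvecs_def by (auto simp: Reals_cnj_iff)
    qed
  qed
  have VN: "vnorm (v i) \<le> vnorm (u i)" if i: "i < N" for i
  proof -
    have vi: "v i \<in> carrier_vec n" and ui: "u i \<in> carrier_vec n" using VC UC i by auto
    have "complex_of_real (\<Sum>l<N. (cmod (ip (v i) (u l)))\<^sup>2) = ip (Sop n N u (v i)) (v i)"
      by (rule Sop_quad[OF UC vi, symmetric])
    also have "\<dots> = ip (u i) (v i)" using Sv[OF i] by simp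
    finally have "(\<Sum>l<N. (cmod (ip (v i) (u l)))\<^sup>2) = Re (ip (u i) (v i))"
      by (metis Re_complex_of_real)
    also have "\<dots> \<le> cmod (ip (u i) (v i))" by (rule complex_Re_le_cmod)
    also have "\<dots> \<le> vnorm (u i) * vnorm (v i)" using ip_CS'[of "v i" "u i"] vi ui by simp
    finally have "(vnorm (v i))\<^sup>2 \<le> vnorm (u i) * vnorm (v i)"
      using Q1[OF vi] unfolding vnorm_sq by simp
    thus ?thesis using vnorm_nonneg[of "v i"] vnorm_nonneg[of "u i"]
      by (cases "vnorm (v i) = 0") (auto simp: power2_eq_square less_le)
  qed
  have Herm: "ip f (v i) = ip (B *\<^sub>v f) (u i)" if f: "f \<in> carrier_vec n" and i: "i < N" for f i
  proof -
    have h: "B *\<^sub>v f \<in> carrier_vec n" using BC f by simp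
    have "f = Sop n N u (B *\<^sub>v f)" using Smul[OF h] SBv[OF f] by simp
    hence "ip f (v i) = ip (Sop n N u (B *\<^sub>v f)) (v i)" by simp
    also have "\<dots> = ip (B *\<^sub>v f) (Sop n N u (v i))" by (rule Sop_herm[OF UC h]) (use VC i in auto)
    also have "\<dots> = ip (B *\<^sub>v f) (u i)" using Sv[OF i] by simp
    finally show ?thesis .
  qed
  have FUb: "1 * (vnorm f)\<^sup>2 \<le> (\<Sum>i<N. (cmod (ip f (u i)))\<^sup>2) \<and>
      (\<Sum>i<N. (cmod (ip f (u i)))\<^sup>2) \<le> (1 + (\<Sum>i<N. nsq (u i))) * (vnorm f)\<^sup>2"
    if f: "f \<in> Hvecs K n" for f
  proof
    have fc: "f \<in> carrier_vec n" using f by (rule Hvecs_carrier)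
    show "1 * (vnorm f)\<^sup>2 \<le> (\<Sum>i<N. (cmod (ip f (u i)))\<^sup>2)" using Q1[OF fc] by (simp add: vnorm_sq)
    have "(\<Sum>i<N. (cmod (ip f (u i)))\<^sup>2) \<le> (\<Sum>i<N. nsq f * nsq (u i))"
      by (intro sum_mono ip_CS) (use UC fc in auto)
    also have "\<dots> = (\<Sum>i<N. nsq (u i)) * nsq f" by (simp add: sum_distrib_left mult.commute)
    also have "\<dots> \<le> (1 + (\<Sum>i<N. nsq (u i))) * nsq f" by (intro mult_right_mono) (auto simp: nsq_nonneg)
    finally show "(\<Sum>i<N. (cmod (ip f (u i)))\<^sup>2) \<le> (1 + (\<Sum>i<N. nsq (u i))) * (vnorm f)\<^sup>2"
      by (simp add: vnorm_sq)
  qed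
  have FU: "is_frame K n N u"
    unfolding is_frame_def
    apply (rule conjI[OF UH])
    apply (rule exI[of _ 1])
    apply (rule exI[of _ "1 + (\<Sum>i<N. nsq (u i))"])
    using FUb by (simp add: sum_nonneg nsq_nonneg add_pos_nonneg)
  define Dn where "Dn = (\<Sum>i<N. nsq (u i))"
  have FVb: "1 / (Dn\<^sup>2 + 1) * (vnorm f)\<^sup>2 \<le> (\<Sum>i<N. (cmod (ip f (v i)))\<^sup>2) \<and>
      (\<Sum>i<N. (cmod (ip f (v i)))\<^sup>2) \<le> (1 + (\<Sum>i<N. nsq (v i))) * (vnorm f)\<^sup>2"
    if f: "f \<in> Hvecs K n" for f
  proof
    have fc: "f \<in> carrier_vec n" using f by (rule Hvecs_carrier)
    define h where "h = B *\<^sub>v f"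
    have hc: "h \<in> carrier_vec n" unfolding h_def using BC fc by simp
    have fS: "f = Sop n N u h" using Smul[OF hc] SBv[OF fc] unfolding h_def by simp
    have e: "(\<Sum>i<N. (cmod (ip f (v i)))\<^sup>2) = (\<Sum>i<N. (cmod (ip h (u i)))\<^sup>2)"
      unfolding h_def using Herm[OF fc] by simp
    have "nsq f \<le> Dn\<^sup>2 * nsq h" unfolding Dn_def by (subst fS) (rule Sop_bound[OF UC hc])
    also have "\<dots> \<le> (Dn\<^sup>2 + 1) * nsq h" by (intro mult_right_mono) (auto simp: nsq_nonneg)
    finally have "nsq f / (Dn\<^sup>2 + 1) \<le> nsq h"
      by (simp add: divide_le_eq add_nonneg_pos mult.commute)
    also have "\<dots> \<le> (\<Sum>i<N. (cmod (ip f (v i)))\<^sup>2)" unfolding e by (rule Q1[OF hc])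
    finally show "1 / (Dn\<^sup>2 + 1) * (vnorm f)\<^sup>2 \<le> (\<Sum>i<N. (cmod (ip f (v i)))\<^sup>2)"
      by (simp add: vnorm_sq)
    have "(\<Sum>i<N. (cmod (ip f (v i)))\<^sup>2) \<le> (\<Sum>i<N. nsq f * nsq (v i))"
      by (intro sum_mono ip_CS) (use VC fc in auto)
    also have "\<dots> = (\<Sum>i<N. nsq (v i)) * nsq f" by (simp add: sum_distrib_left mult.commute)
    also have "\<dots> \<le> (1 + (\<Sum>i<N. nsq (v i))) * nsq f" by (intro mult_right_mono) (auto simp: nsq_nonneg)
    finally show "(\<Sum>i<N. (cmod (ip f (v i)))\<^sup>2) \<le> (1 + (\<Sum>i<N. nsq (v i))) * (vnorm f)\<^sup>2"
      by (simp add: vnorm_sq)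
  qed
  have FV: "is_frame K n N v"
    unfolding is_frame_def
    apply (rule conjI[OF VH])
    apply (rule exI[of _ "1 / (Dn\<^sup>2 + 1)"])
    apply (rule exI[of _ "1 + (\<Sum>i<N. nsq (v i))"])
    using FVb by (simp add: sum_nonneg nsq_nonneg add_pos_nonneg add_nonneg_pos)
  have DV: "is_dual K n N u v"
    unfolding is_dual_def
  proof (intro conjI FV ballI)
    fix f assume f: "f \<in> Hvecs K n"
    hence fc: "f \<in> carrier_vec n" by (rule Hvecs_carrier)
    have "finsum_vec TYPE(complex) n (\<lambda>i. ip f (u i) \<cdot>\<^sub>v v i) {..<N}
        = vec n (\<lambda>j. \<Sum>i<N. ip f (u i) * v i $ j)"
      by (rule finsum_vec_eq[OF VC])
    also have "\<dots> = vec n (\<lambda>j. \<Sum>i<N. ip f (u i) * (B *\<^sub>v u i) $ j)"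
      unfolding v_def ..
    also have "\<dots> = B *\<^sub>v Sop n N u f" unfolding Sop_def by (rule mat_lincomb[OF BC UC, symmetric])
    also have "\<dots> = f" using Smul[OF fc] BSv[OF fc] by simp
    finally show "f = finsum_vec TYPE(complex) n (\<lambda>i. ip f (u i) \<cdot>\<^sub>v v i) {..<N}" by simp
    have hc: "B *\<^sub>v f \<in> carrier_vec n" using BC fc by simp
    have "finsum_vec TYPE(complex) n (\<lambda>i. ip f (v i) \<cdot>\<^sub>v u i) {..<N}
        = vec n (\<lambda>j. \<Sum>i<N. ip f (v i) * u i $ j)"
      by (rule finsum_vec_eq[OF UC])
    also have "\<dots> = vec n (\<lambda>j. \<Sum>i<N. ip (B *\<^sub>v f) (u i) * u i $ j)"
      using Herm[OF fc] by simp
    also have "\<dots> = Sop n N u (B *\<^sub>v f)" unfolding Sop_def ..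
    also have "\<dots> = f" using Smul[OF hc] SBv[OF fc] by simp
    finally show "f = finsum_vec TYPE(complex) n (\<lambda>i. ip f (v i) \<cdot>\<^sub>v u i) {..<N}" by simp
  qed
  have DP: "is_dual_pair K n N u v" unfolding is_dual_pair_def using FU DV by simp
  have Npos: "N > 0" using frame_N_pos[OF n K FU] .
  have "O1 K n N p u v \<le> A1 K n N p F G"
    unfolding O1_eq
  proof (rule Max.boundedI)
    show "finite ((\<lambda>i. op_norm K n (error_op N n p {i} u v)) ` {..<N})" by simp
    show "(\<lambda>i. op_norm K n (error_op N n p {i} u v)) ` {..<N} \<noteq> {}" using Npos by auto
  next
    fix a assume "a \<in> (\<lambda>i. op_norm K n (error_op N n p {i} u v)) ` {..<N}"
    then obtain i where i: "i < N" and a: "a = op_norm K n (error_op N n p {i} u v)" by auto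
    have q: "0 \<le> weight N n p i" by (rule weight_nonneg[OF P i])
    have Fi: "F i \<in> carrier_vec n" and Gi: "G i \<in> carrier_vec n" using FC GC i by auto
    have "a = weight N n p i * vnorm (u i) * vnorm (v i)"
      unfolding a by (rule op_norm_rank1[of K u i n v N p, OF K _ _ q]) (use UH VC i in auto)
    also have "\<dots> \<le> weight N n p i * (vnorm (u i) * vnorm (u i))"
      using VN[OF i] q vnorm_nonneg[of "u i"] vnorm_nonneg[of "v i"]
      by (simp add: mult.assoc mult_left_mono)
    also have "vnorm (u i) * vnorm (u i) = nsq (uvec (F i) (G i))"
      unfolding u_def vnorm_sq[symmetric] power2_eq_square ..
    also have "weight N n p i * \<dots> \<le> weight N n p i * ((vnorm (F i) * vnorm (G i) + cmod (ip (G i) (F i))) / 2)"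
      by (intro mult_left_mono U3[OF Fi Gi] q)
    also have "\<dots> = (op_norm K n (error_op N n p {i} F G) + weight N n p i * cmod (ip (G i) (F i))) / 2"
      using op_norm_rank1[of K F i n G N p, OF K _ Gi q] FH i by (simp add: algebra_simps)
    also have "\<dots> \<le> (op_norm K n (error_op N n p {i} F G) + spectral_radius (error_op N n p {i} F G)) / 2"
      using sr_lower[of n F i G N p, OF n Fi Gi q] by simp
    also have "\<dots> \<le> A1 K n N p F G" unfolding A1_eq using i by (intro Max_ge) auto
    finally show "a \<le> A1 K n N p F G" .
  qed
  thus ?thesis using DP by blast
qed



lemma dual_pair_facts: assumes "is_dual_pair K n N F G"
  shows "\<forall>i<N. F i \<in> Hvecs K n" "\<forall>i<N. G i \<in> Hvecs K n" "is_frame K n N F"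
  using assms unfolding is_dual_pair_def is_dual_def is_frame_def by auto

lemma A1_le_O1: assumes n: "n > 0" and N: "N > 0" and K: "goodK K" and P: "is_prob_seq N p"
  and F: "\<forall>i<N. F i \<in> Hvecs K n" and G: "\<forall>i<N. G i \<in> carrier_vec n"
  shows "A1 K n N p F G \<le> O1 K n N p F G"
  unfolding A1_eq O1_eq
proof (rule Max.boundedI)
  show "finite ((\<lambda>i. (op_norm K n (error_op N n p {i} F G) + spectral_radius (error_op N n p {i} F G)) / 2) ` {..<N})" by simp
  show "(\<lambda>i. (op_norm K n (error_op N n p {i} F G) + spectral_radius (error_op N n p {i} F G)) / 2) ` {..<N} \<noteq> {}" using N by auto
next
  fix a assume "a \<in> (\<lambda>i. (op_norm K n (error_op N n p {i} F G) + spectral_radius (error_op N n p {i} F G)) / 2) ` {..<N}"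
  then obtain i where i: "i < N" and a: "a = (op_norm K n (error_op N n p {i} F G) + spectral_radius (error_op N n p {i} F G)) / 2" by auto
  have Fi: "F i \<in> carrier_vec n" using F i Hvecs_carrier by auto
  have q: "0 \<le> weight N n p i" by (rule weight_nonneg[OF P i])
  have on: "op_norm K n (error_op N n p {i} F G) = weight N n p i * vnorm (F i) * vnorm (G i)"
    by (rule op_norm_rank1[of K F i n G N p, OF K _ _ q]) (use F G i in auto)
  have "spectral_radius (error_op N n p {i} F G) \<le> op_norm K n (error_op N n p {i} F G)"
    unfolding on by (rule sr_upper[of n F i G N p, OF n Fi _ q]) (use G i in auto)
  hence "(op_norm K n (error_op N n p {i} F G) + spectral_radius (error_op N n p {i} F G)) / 2
     \<le> op_norm K n (error_op N n p {i} F G)" by simp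
  also have "\<dots> \<le> Max ((\<lambda>i. op_norm K n (error_op N n p {i} F G)) ` {..<N})"
    using i by (intro Max_ge) auto
  finally show "a \<le> Max ((\<lambda>i. op_norm K n (error_op N n p {i} F G)) ` {..<N})" unfolding a .
qed

lemma A1_nonneg: assumes n: "n > 0" and N: "N > 0" and K: "goodK K" and P: "is_prob_seq N p"
  and F: "\<forall>i<N. F i \<in> Hvecs K n" and G: "\<forall>i<N. G i \<in> carrier_vec n"
  shows "0 \<le> A1 K n N p F G" "0 \<le> O1 K n N p F G"
proof -
  have q: "0 \<le> weight N n p 0" by (rule weight_nonneg[OF P N])
  have on: "op_norm K n (error_op N n p {0} F G) = weight N n p 0 * vnorm (F 0) * vnorm (G 0)"
    by (rule op_norm_rank1[of K F 0 n G N p, OF K _ _ q]) (use F G N in auto)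
  hence on0: "0 \<le> op_norm K n (error_op N n p {0} F G)" using q vnorm_nonneg by simp
  have "0 \<le> (op_norm K n (error_op N n p {0} F G) + spectral_radius (error_op N n p {0} F G)) / 2"
    using on0 sr_nonneg[OF n, of N p "{0}" F G] by simp
  also have "\<dots> \<le> A1 K n N p F G" unfolding A1_eq using N by (intro Max_ge) auto
  finally show "0 \<le> A1 K n N p F G" .
  have "op_norm K n (error_op N n p {0} F G) \<le> O1 K n N p F G" unfolding O1_eq using N by (intro Max_ge) auto
  thus "0 \<le> O1 K n N p F G" using on0 by simp
qed

lemma opt_eq: assumes n: "n > 0" and K: "goodK K" and P: "is_prob_seq N p"
  and ex: "is_dual_pair K n N F0 G0"
  shows "O1_opt K n N p = A1_opt K n N p"
proof -
  define SO where "SO = {O1 K n N p F G | F G. is_dual_pair K n N F G}"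
  define SA where "SA = {A1 K n N p F G | F G. is_dual_pair K n N F G}"
  have facts: "N > 0 \<and> (\<forall>i<N. F i \<in> Hvecs K n) \<and> (\<forall>i<N. G i \<in> carrier_vec n)"
    if "is_dual_pair K n N F G" for F G
    using dual_pair_facts[OF that] frame_N_pos[OF n K] Hvecs_carrier by blast
  have neO: "SO \<noteq> {}" unfolding SO_def using ex by auto
  have neA: "SA \<noteq> {}" unfolding SA_def using ex by auto
  have bO: "bdd_below SO" unfolding SO_def
    by (rule bdd_belowI[of _ 0]) (use A1_nonneg[OF n _ K P] facts in force)
  have bA: "bdd_below SA" unfolding SA_def
    by (rule bdd_belowI[of _ 0]) (use A1_nonneg[OF n _ K P] facts in force)
  have "Inf SA \<le> Inf SO"
  proof (rule cInf_greatest[OF neO])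
    fix x assume "x \<in> SO"
    then obtain F G where x: "x = O1 K n N p F G" and d: "is_dual_pair K n N F G" unfolding SO_def by auto
    have "Inf SA \<le> A1 K n N p F G" by (rule cInf_lower[OF _ bA]) (use d SA_def in auto)
    also have "\<dots> \<le> x" unfolding x using A1_le_O1[OF n _ K P] facts[OF d] by blast
    finally show "Inf SA \<le> x" .
  qed
  moreover have "Inf SO \<le> Inf SA"
  proof (rule cInf_greatest[OF neA])
    fix y assume "y \<in> SA"
    then obtain F G where y: "y = A1 K n N p F G" and d: "is_dual_pair K n N F G" unfolding SA_def by auto
    obtain U V where U: "is_dual_pair K n N U V" and le: "O1 K n N p U V \<le> y"
      using construct[OF n K P d] y by auto
    have "Inf SO \<le> O1 K n N p U V" by (rule cInf_lower[OF _ bO]) (use U SO_def in auto)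
    thus "Inf SO \<le> y" using le by simp
  qed
  ultimately show ?thesis unfolding O1_opt_def A1_opt_def SO_def[symmetric] SA_def[symmetric] by simp
qed

lemma error_op_n0: "error_op N 0 p L F G = error_op N 0 p L F' G'"
  unfolding error_op_def by (rule eq_matI) auto

lemma O1_n0: "O1 K 0 N p F G = O1 K 0 N p F' G'"
  unfolding O1_def by (simp only: error_op_n0[of N p _ F G F' G'])

lemma A1_n0: "A1 K 0 N p F G = A1 K 0 N p F' G'"
  unfolding A1_def by (simp only: error_op_n0[of N p _ F G F' G'])

theorem theorem4p3:
  fixes K :: "complex set" and n N :: nat and F :: "nat \<Rightarrow> complex vec" and p :: "nat \<Rightarrow> real"
  assumes "K = \<real> \<or> K = UNIV"
    and "is_tight_frame K n N F"
    and "is_prob_seq N p"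
  shows "is_POD_pair K n N p F (canon_dual n N F) \<longleftrightarrow> (F, canon_dual n N F) \<in> zeta1 K n N p"
proof -
  have K: "goodK K" using assms(1) unfolding goodK_def .
  let ?G = "canon_dual n N F"
  show ?thesis
  proof (cases "n = 0")
    case True
    have "O1_opt K n N p = O1 K n N p F ?G" if d: "is_dual_pair K n N F ?G"
    proof -
      have "{O1 K n N p F' G' | F' G'. is_dual_pair K n N F' G'} = {O1 K n N p F ?G}"
        using d True O1_n0[of K N p _ _ F ?G] by auto
      thus ?thesis unfolding O1_opt_def by simp
    qed
    moreover have "A1_opt K n N p = A1 K n N p F ?G" if d: "is_dual_pair K n N F ?G"
    proof -
      have "{A1 K n N p F' G' | F' G'. is_dual_pair K n N F' G'} = {A1 K n N p F ?G}"
        using d True A1_n0[of K N p _ _ F ?G] by auto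
      thus ?thesis unfolding A1_opt_def by simp
    qed
    ultimately show ?thesis unfolding is_POD_pair_def zeta1_def is_PASOD_pair_def by auto
  next
    case False
    hence n: "n > 0" by simp
    have "A1 K n N p F ?G = O1 K n N p F ?G" by (rule canon_A1_O1[OF n K assms(2,3)])
    moreover have "O1_opt K n N p = A1_opt K n N p" if d: "is_dual_pair K n N F ?G"
      by (rule opt_eq[OF n K assms(3) d])
    ultimately show ?thesis unfolding is_POD_pair_def zeta1_def is_PASOD_pair_def by auto
  qed
qed

end
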